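(* Let $\mathcal{G}_N$ (the Newton group) be the group of transformations of $\mathbb{R}^4=\mathbb{R}^3\times\mathbb{R}$ of the form $(\mathbf{x},x^4)\mapsto(S\mathbf{x},x^4)+b$ with $S\in SO(3)$ and $b\in\mathbb{R}^4$. An equivalence relation on $\mathbb{R}^4$ is $\mathcal{G}_N$-invariant if and only if there is an additive subgroup $H$ of $\mathbb{R}$ such that either (i) the equivalence class of every $x$ is $[x]=x+(\{\mathbf{0}\}\times H)$, or (ii) the equivalence class of every $x$ is $[x]=x+(\mathbb{R}^3\times H)$.
   Context: An equivalence relation $\sim$ on $\mathbb{R}^4$ is $\mathcal{G}_N$-invariant if $x\sim y$ implies $g(x)\sim g(y)$ for all $x,y$ and all $g\in\mathcal{G}_N$. *)

theory Defs
  imports "HOL-Analysis.Analysis"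
begin

type_synonym pt4 = "(real^3) \<times> real"

definition SO3 :: "(real^3^3) set" where
  "SO3 = {S. orthogonal_matrix S \<and> det S = 1}"

definition newton_group :: "(pt4 \<Rightarrow> pt4) set" where
  "newton_group = {g. \<exists>S\<in>SO3. \<exists>b::pt4. \<forall>x::real^3. \<forall>t::real.
                        g (x, t) = (S *v x + fst b, t + snd b)}"

definition GN_invariant :: "pt4 rel \<Rightarrow> bool" where
  "GN_invariant R \<longleftrightarrow> (\<forall>x y. (x, y) \<in> R \<longrightarrow> (\<forall>g\<in>newton_group. (g x, g y) \<in> R))"

definition additive_subgroup :: "real set \<Rightarrow> bool" where
  "additive_subgroup H \<longleftrightarrow> 0 \<in> H \<and> (\<forall>a\<in>H. \<forall>b\<in>H. a + b \<in> H \<and> - a \<in> H)"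

end

theory Submission
  imports Defs
begin

lemma mat1_SO3: "mat 1 \<in> SO3"
  by (simp add: SO3_def orthogonal_matrix_id det_I)

lemma transl_GN: "(\<lambda>p. p + b) \<in> newton_group"
  unfolding newton_group_def using mat1_SO3
  by (cases b) (auto simp: matrix_vector_mul_lid intro!: bexI[of _ "mat 1"])

lemma rot_GN: "S \<in> SO3 \<Longrightarrow> (\<lambda>p. (S *v fst p, snd p)) \<in> newton_group"
  unfolding newton_group_def
  by (auto intro!: bexI[of _ S] exI[of _ "(0,0)"])

lemma rot_exists:
  fixes a b :: "real^3"
  assumes "norm a = norm b"
  shows "\<exists>S\<in>SO3. S *v a = b"
proof -
  obtain f where f: "orthogonal_transformation f" "det(matrix f) = 1" "f a = b"
    using rotation_exists[of a b] assms by auto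
  have lin: "linear f" using f(1) orthogonal_transformation_linear by blast
  have "orthogonal_matrix (matrix f)" using f(1) orthogonal_transformation_matrix by blast
  moreover have "matrix f *v a = b" using matrix_vector_mul(2)[OF lin] f(3) by metis
  ultimately show ?thesis using f(2) unfolding SO3_def by blast
qed

lemma perp_split:
  fixes u :: "real^3"
  assumes "r > 0" "norm u \<le> 2 * r"
  shows "\<exists>a b. norm a = r \<and> norm b = r \<and> a - b = u"
proof -
  obtain p where p: "p \<noteq> 0" "orthogonal u p"
    using orthogonal_to_vector_exists[of u] by auto
  define c where "c = sqrt (r^2 - (norm u)^2 / 4)"
  have c2: "c^2 = r^2 - (norm u)^2/4"
  proof -
    have "(norm u)^2 \<le> (2*r)^2" using assms norm_ge_zero power_mono by blast
    then show ?thesis unfolding c_def by (simp add: power_mult_distrib)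
  qed
  define q where "q = (c / norm p) *\<^sub>R p"
  have nq: "norm q = \<bar>c\<bar>" using p(1) unfolding q_def by simp
  have oq: "orthogonal ((1/2) *\<^sub>R u) q" "orthogonal (- ((1/2) *\<^sub>R u)) q"
    using p(2) unfolding q_def orthogonal_def by (auto simp: inner_commute)
  have "(norm ((1/2) *\<^sub>R u + q))^2 = r^2"
    using norm_add_Pythagorean[OF oq(1)] nq c2 by (simp add: power_mult_distrib power2_abs power_divide)
  hence 1: "norm ((1/2) *\<^sub>R u + q) = r" using assms(1)
    by (metis norm_ge_zero less_le power2_eq_imp_eq)
  have "(norm (- ((1/2) *\<^sub>R u) + q))^2 = r^2"
    using norm_add_Pythagorean[OF oq(2)] nq c2 by (simp add: power_mult_distrib power2_abs power_divide)
  hence 2: "norm (- ((1/2) *\<^sub>R u) + q) = r" using assms(1)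
    by (metis norm_ge_zero less_le power2_eq_imp_eq)
  have "((1/2) *\<^sub>R u + q) - (- ((1/2) *\<^sub>R u) + q) = u"
    by (simp add: algebra_simps scaleR_2[symmetric])
  with 1 2 show ?thesis by blast
qed

theorem theorem3p3:
  fixes R :: "pt4 rel"
  assumes "equiv UNIV R"
  shows "GN_invariant R \<longleftrightarrow>
    (\<exists>H. additive_subgroup H \<and>
      ((\<forall>x. R `` {x} = {x + (0, h) | h. h \<in> H}) \<or>
       (\<forall>x. R `` {x} = {x + (v, h) | v h. h \<in> H})))"
proof
  have refl: "(x,x) \<in> R" for x using assms unfolding equiv_def refl_on_def by blast
  have sym: "(x,y) \<in> R \<Longrightarrow> (y,x) \<in> R" for x y using assms unfolding equiv_def sym_def by blast
  have trn: "(x,y) \<in> R \<Longrightarrow> (y,z) \<in> R \<Longrightarrow> (x,z) \<in> R" for x y z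
    using assms unfolding equiv_def trans_def by blast
  assume inv: "GN_invariant R"
  have gi: "(g x, g y) \<in> R" if "(x,y) \<in> R" "g \<in> newton_group" for x y g
    using inv that unfolding GN_invariant_def by blast
  have tr: "(x+b, y+b) \<in> R" if "(x,y) \<in> R" for x y b
    using gi[OF that transl_GN[of b]] by simp
  have rot: "(0, (S *v fst d, snd d)) \<in> R" if "(0,d) \<in> R" "S \<in> SO3" for d S
  proof -
    have "((\<lambda>p. (S *v fst p, snd p)) 0, (\<lambda>p. (S *v fst p, snd p)) d) \<in> R"
      using gi[OF that(1) rot_GN[OF that(2)]] .
    then show ?thesis by (simp add: zero_prod_def)
  qed
  have key: "(x,y) \<in> R \<longleftrightarrow> (0, y - x) \<in> R" for x y
    using tr[of x y "-x"] tr[of 0 "y - x" x] by auto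
  have add: "(0,a+b) \<in> R" if "(0,a) \<in> R" "(0,b) \<in> R" for a b
  proof -
    have "(a, b + a) \<in> R" using tr[OF that(2), of a] by simp
    with that(1) show ?thesis using trn by (simp add: add.commute)
  qed
  have neg: "(0,-a) \<in> R" if "(0,a) \<in> R" for a
    using tr[OF that, of "-a"] sym by simp
  define H where "H = {h. (0,(0::real^3,h)) \<in> R}"
  have h0: "0 \<in> H" unfolding H_def using refl[of 0] by (simp add: zero_prod_def)
  have hadd: "a + b \<in> H" if "a \<in> H" "b \<in> H" for a b
    using that add[of "(0,a)" "(0,b)"] unfolding H_def by simp
  have hneg: "- a \<in> H" if "a \<in> H" for a
    using that neg[of "(0,a)"] unfolding H_def by simp
  have sg: "additive_subgroup H"
    unfolding additive_subgroup_def using h0 hadd hneg by blast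
  show "\<exists>H. additive_subgroup H \<and>
      ((\<forall>x. R `` {x} = {x + (0, h) | h. h \<in> H}) \<or>
       (\<forall>x. R `` {x} = {x + (v, h) | v h. h \<in> H}))"
  proof (cases "\<exists>v h. v \<noteq> 0 \<and> (0,(v,h)) \<in> R")
    case True
    then obtain v h where vh: "v \<noteq> 0" "(0,(v,h)) \<in> R" by blast
    define r where "r = norm v"
    have r: "r > 0" using vh(1) unfolding r_def by simp
    have small: "(0,(u,0)) \<in> R" if u: "norm u \<le> 2*r" for u
    proof -
      obtain a b where ab: "norm a = r" "norm b = r" "a - b = u"
        using perp_split[OF r u] by blast
      obtain S where S: "S \<in> SO3" "S *v v = a" using rot_exists[of v a] ab r_def by auto
      obtain T where T: "T \<in> SO3" "T *v v = b" using rot_exists[of v b] ab r_def by auto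
      have "(0,(a,h)) \<in> R" using rot[OF vh(2) S(1)] S(2) by simp
      moreover have "(0,-(b,h)) \<in> R" using neg[OF rot[OF vh(2) T(1)]] T(2) by simp
      ultimately have "(0,(a,h) + -(b,h)) \<in> R" by (rule add)
      then show ?thesis using ab(3) by simp
    qed
    have mult: "(0, real n *\<^sub>R d) \<in> R" if "(0,d) \<in> R" for d n
    proof (induction n)
      case 0
      then show ?case using refl by simp
    next
      case (Suc n)
      have "(0, real n *\<^sub>R d + d) \<in> R" using add[OF Suc that] .
      then show ?case by (simp add: algebra_simps)
    qed
    have all: "(0,(u,0)) \<in> R" for u
    proof -
      obtain n where n: "norm u / (2*r) < real n" using reals_Archimedean2 by blast
      have np: "real n > 0" using n r by (smt (verit) divide_nonneg_pos norm_ge_zero)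
      have "norm u < 2 * r * real n" using n r by (simp add: field_simps)
      hence "norm (u /\<^sub>R real n) \<le> 2*r" using np by (simp add: field_simps)
      from mult[OF small[OF this], of n] np show ?thesis by simp
    qed
    have "R `` {x} = {x + (v, h) | v h. h \<in> H}" for x
    proof (intro set_eqI iffI)
      fix y assume "y \<in> R `` {x}"
      hence y: "(0, y - x) \<in> R" using key[of x y] by simp
      obtain v' h' where vh': "y - x = (v',h')" by fastforce
      have "(0, (v',h') + -(v',0)) \<in> R" using add[OF y[unfolded vh'] neg[OF all[of v']]] .
      hence "h' \<in> H" unfolding H_def by simp
      moreover have "y = x + (v',h')" using vh' by (metis add.commute diff_add_cancel)
      ultimately show "y \<in> {x + (v, h) | v h. h \<in> H}" by blast
    next
      fix y assume "y \<in> {x + (v, h) | v h. h \<in> H}"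
      then obtain v' h' where y: "y = x + (v',h')" "h' \<in> H" by blast
      have "(0,(0::real^3,h')) \<in> R" using y(2) unfolding H_def by simp
      from add[OF all[of v'] this] have "(0, (v',h')) \<in> R" by simp
      then show "y \<in> R `` {x}" using key[of x y] y(1) by simp
    qed
    then show ?thesis using sg by blast
  next
    case False
    have "R `` {x} = {x + (0, h) | h. h \<in> H}" for x
    proof (intro set_eqI iffI)
      fix y assume "y \<in> R `` {x}"
      hence y: "(0, y - x) \<in> R" using key[of x y] by simp
      obtain v' h' where vh': "y - x = (v',h')" by fastforce
      have v0: "v' = 0" using False y vh' by auto
      hence "h' \<in> H" using y vh' unfolding H_def by simp
      moreover have "y = x + (0,h')" using vh' v0 by (metis add.commute diff_add_cancel)
      ultimately show "y \<in> {x + (0, h) | h. h \<in> H}" by blast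
    next
      fix y assume "y \<in> {x + (0, h) | h. h \<in> H}"
      then obtain h' where y: "y = x + (0,h')" "h' \<in> H" by blast
      then show "y \<in> R `` {x}" using key[of x y] unfolding H_def by simp
    qed
    then show ?thesis using sg by blast
  qed
next
  assume "\<exists>H. additive_subgroup H \<and>
      ((\<forall>x. R `` {x} = {x + (0, h) | h. h \<in> H}) \<or>
       (\<forall>x. R `` {x} = {x + (v, h) | v h. h \<in> H}))"
  then obtain H where H: "(\<forall>x. R `` {x} = {x + (0, h) | h. h \<in> H}) \<or>
       (\<forall>x. R `` {x} = {x + (v, h) | v h. h \<in> H})" by blast
  show "GN_invariant R"
    unfolding GN_invariant_def
  proof (intro allI impI ballI)
    fix x y g assume xy: "(x,y) \<in> R" and g: "g \<in> newton_group"
    then obtain S b where gS: "\<And>x t. g (x, t) = (S *v x + fst b, t + snd b)"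
      unfolding newton_group_def by blast
    obtain x1 x2 where x: "x = (x1,x2)" by fastforce
    have yx: "y \<in> R `` {x}" using xy by simp
    from H show "(g x, g y) \<in> R"
    proof
      assume A: "\<forall>x. R `` {x} = {x + (0, h) | h. h \<in> H}"
      then obtain h where h: "y = x + (0,h)" "h \<in> H" using yx by blast
      have "g y = g x + (0,h)" using h(1) x gS by simp
      hence "g y \<in> R `` {g x}" using A h(2) by blast
      then show ?thesis by simp
    next
      assume A: "\<forall>x. R `` {x} = {x + (v, h) | v h. h \<in> H}"
      then obtain v h where h: "y = x + (v,h)" "h \<in> H" using yx by blast
      have "g y = g x + (S *v v, h)" using h(1) x gS
        by (simp add: matrix_vector_right_distrib algebra_simps)
      hence "g y \<in> R `` {g x}" using A h(2) by blast
      then show ?thesis by simp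
    qed
  qed
qed

end
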